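(* For every $d\in\mathbb{Z}\setminus\{0\}$ and every $i=1,\ldots,n$, we have $\widetilde\phi^{\,d}(x_i)\in\mathcal{P}_{(2n-i-1)l,\,1}$.
   Context: Let $k$ be a field of characteristic zero, $n\ge3$, $l\ge1$, and $k[t,\mathbf{x}]=k[t,x_1,\ldots,x_n]$. Let $\widetilde D=\sum_{j=1}^{n-1}(n-j)\,x_{j+1}\,\partial/\partial x_j$ and $\widetilde{D'}=\sum_{j=2}^{n}(j-1)\,x_{j-1}\,\partial/\partial x_j$ as derivations of $k[t,\mathbf{x}]$ (so they kill $t$). For $p\in\ker\widetilde D$, $\widetilde\epsilon_p=\exp(p\widetilde D)$; for $q\in\ker\widetilde{D'}$, $\widetilde{\epsilon'_q}=\exp(q\widetilde{D'})$, with $\exp E(g)=\sum_{i\ge0}E^i(g)/i!$. Let $\widetilde\phi=\widetilde\epsilon_{t^l}\circ\widetilde{\epsilon'_1}\circ\widetilde\epsilon_{-t^l}$ ($\circ$ = composition). For $p=\sum u_{i_0,\ldots,i_n}t^{i_0}x_1^{i_1}\cdots x_n^{i_n}\neq0$, $\mathrm{supp}(p)=\{(i_0,\ldots,i_n):u_{i_0,\ldots,i_n}\neq0\}$, and for $\mathbf{w}\in\mathbb{N}^{n+1}$, $\deg_{\mathbf w}(p)=\max\{\sum_j i_jw_j:(i_0,\ldots,i_n)\in\mathrm{supp}(p)\}$. $\mathrm{lt}(p)$ is the leading term of $p$ for the lexicographic order with $t>x_1>\cdots>x_n$ (i.e. $t^{i_0}x_1^{i_1}\cdots x_n^{i_n}<t^{j_0}x_1^{j_1}\cdots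 x_n^{j_n}$ iff $i_r<j_r$ at the first index $r$ where they differ). Let $\mathbf{w}_1=(1,1,\ldots,1)$ and $\mathbf{w}_2=(n-2,\,2n-2,\,2n-3,\,\ldots,\,n-1)$ (weight $n-2$ on $t$ and $2n-j-1$ on $x_j$). For $\alpha,\beta\ge1$, $\mathcal{P}_{\alpha,\beta}$ is the set of nonzero $p\in k[t,\mathbf{x}]$ with $\deg_{\mathbf{w}_1}(p)\le\alpha+\beta$, $\deg_{\mathbf{w}_2}(p)\le(n-2)\alpha+(n-1)\beta$, and $\mathrm{lt}(p)\in k^*t^\alpha x_n^\beta$. *)

theory Defs
  imports Main "HOL-Library.Poly_Mapping"
begin

text \<open>Polynomials in k[t, x_1, ..., x_n]: finitely supported maps from monomials
  (exponent vectors nat =>0 nat) to coefficients. Variable 0 is t, variable j (1 <= j <= n) is x_j.\<close>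

type_synonym 'k mpoly = "(nat \<Rightarrow>\<^sub>0 nat) \<Rightarrow>\<^sub>0 'k"

definition Var :: "nat \<Rightarrow> 'k::comm_ring_1 mpoly" where
  "Var j = Poly_Mapping.single (Poly_Mapping.single j 1) 1"

definition Const :: "'k::comm_ring_1 \<Rightarrow> 'k mpoly" where
  "Const c = Poly_Mapping.single 0 c"

definition pderivv :: "nat \<Rightarrow> 'k::comm_ring_1 mpoly \<Rightarrow> 'k mpoly" where
  "pderivv j p = (\<Sum>m\<in>Poly_Mapping.keys p.  Poly_Mapping.single (m - Poly_Mapping.single j 1)
                    (of_nat (Poly_Mapping.lookup (m::nat \<Rightarrow>\<^sub>0 nat) j) * Poly_Mapping.lookup p m :: 'k))"

definition Dt :: "nat \<Rightarrow> 'k::comm_ring_1 mpoly \<Rightarrow> 'k mpoly" where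
  "Dt n g = (\<Sum>j\<in>{1..n-1}. of_nat (n - j) * Var (j+1) * pderivv j g)"

definition Dt' :: "nat \<Rightarrow> 'k::comm_ring_1 mpoly \<Rightarrow> 'k mpoly" where
  "Dt' n g = (\<Sum>j\<in>{2..n}. of_nat (j - 1) * Var (j-1) * pderivv j g)"

definition expE :: "('k::field_char_0 mpoly \<Rightarrow> 'k mpoly) \<Rightarrow> 'k mpoly \<Rightarrow> 'k mpoly" where
  "expE E g = (\<Sum>i < (LEAST N. \<forall>m\<ge>N. (E ^^ m) g = 0). Const (1 / fact i) * (E ^^ i) g)"

definition eps :: "nat \<Rightarrow> 'k::field_char_0 mpoly \<Rightarrow> 'k mpoly \<Rightarrow> 'k mpoly" where
  "eps n p = expE (\<lambda>g. p * Dt n g)"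

definition eps' :: "nat \<Rightarrow> 'k::field_char_0 mpoly \<Rightarrow> 'k mpoly \<Rightarrow> 'k mpoly" where
  "eps' n q = expE (\<lambda>g. q * Dt' n g)"

definition phi :: "nat \<Rightarrow> nat \<Rightarrow> 'k::field_char_0 mpoly \<Rightarrow> 'k mpoly" where
  "phi n l = eps n (Var 0 ^ l) \<circ> eps' n 1 \<circ> eps n (- (Var 0 ^ l))"

definition ipow :: "('a \<Rightarrow> 'a) \<Rightarrow> int \<Rightarrow> 'a \<Rightarrow> 'a" where
  "ipow f d = (if d \<ge> 0 then f ^^ nat d else (inv f) ^^ nat (- d))"

definition wdeg :: "nat \<Rightarrow> (nat \<Rightarrow> nat) \<Rightarrow> 'k::zero mpoly \<Rightarrow> nat" where
  "wdeg n w p = Max ((\<lambda>m. \<Sum>j\<in>{0..n}. Poly_Mapping.lookup m j * w j) ` Poly_Mapping.keys p)"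

definition w1 :: "nat \<Rightarrow> nat" where "w1 j = 1"

definition w2 :: "nat \<Rightarrow> nat \<Rightarrow> nat" where
  "w2 n j = (if j = 0 then n - 2 else 2 * n - j - 1)"

definition lex_less :: "(nat \<Rightarrow>\<^sub>0 nat) \<Rightarrow> (nat \<Rightarrow>\<^sub>0 nat) \<Rightarrow> bool" where
  "lex_less m m' \<longleftrightarrow> (\<exists>r. (\<forall>s<r. Poly_Mapping.lookup m s = Poly_Mapping.lookup m' s) \<and> Poly_Mapping.lookup m r < Poly_Mapping.lookup m' r)"

definition is_lead_mon :: "'k::zero mpoly \<Rightarrow> (nat \<Rightarrow>\<^sub>0 nat) \<Rightarrow> bool" where
  "is_lead_mon p m \<longleftrightarrow> m \<in> Poly_Mapping.keys p \<and> (\<forall>m'\<in>Poly_Mapping.keys p. m' \<noteq> m \<longrightarrow> lex_less m' m)"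

definition Pset :: "nat \<Rightarrow> nat \<Rightarrow> nat \<Rightarrow> 'k::zero mpoly set" where
  "Pset n \<alpha> \<beta> = {p. p \<noteq> 0 \<and> wdeg n w1 p \<le> \<alpha> + \<beta>
      \<and> wdeg n (w2 n) p \<le> (n - 2) * \<alpha> + (n - 1) * \<beta>
      \<and> is_lead_mon p (Poly_Mapping.single 0 \<alpha> + Poly_Mapping.single n \<beta>)}"

end

theory Submission
  imports Defs "HOL-Computational_Algebra.Polynomial"
begin


lemma Const_mult: "Const a * Const b = (Const (a*b) :: 'k::comm_ring_1 mpoly)"
  by (simp add: Const_def mult_single)
lemma Const_1 [simp]: "Const 1 = 1" by (simp add: Const_def)
lemma Const_0 [simp]: "Const 0 = 0" by (simp add: Const_def)
lemma Const_add: "Const (a + b) = Const a + Const b" by (simp add: Const_def single_add)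
lemma Const_single: "Const c * Poly_Mapping.single m x = Poly_Mapping.single m (c * x)"
  by (simp add: Const_def mult_single)
lemma Const_sum: "Const (sum f A) = (\<Sum>x\<in>A. Const (f x))"
  by (induction A rule: infinite_finite_induct) (auto simp: Const_add)
lemma Const_uminus: "Const (- a) = - Const a" by (simp add: Const_def single_uminus)

lemma poly_mapping_sum_rep:
  "p = (\<Sum>m\<in>Poly_Mapping.keys p. Poly_Mapping.single m (Poly_Mapping.lookup p m))"
proof (rule poly_mapping_eqI)
  fix k
  show "Poly_Mapping.lookup p k = Poly_Mapping.lookup (\<Sum>m\<in>Poly_Mapping.keys p. Poly_Mapping.single m (Poly_Mapping.lookup p m)) k"
    by (simp add: lookup_sum lookup_single when_def in_keys_iff)
qed

section \<open>Partial derivatives\<close>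

lemma pderivv_superset:
  assumes "finite S" "Poly_Mapping.keys p \<subseteq> S"
  shows "pderivv j p = (\<Sum>m\<in>S. Poly_Mapping.single (m - Poly_Mapping.single j 1)
            (of_nat (Poly_Mapping.lookup m j) * Poly_Mapping.lookup p m))"
  unfolding pderivv_def
  by (rule sum.mono_neutral_left[OF assms(1) assms(2)]) (auto simp: in_keys_iff)

lemma pderivv_add: "pderivv j (p + q) = pderivv j p + pderivv j q"
proof -
  let ?S = "Poly_Mapping.keys p \<union> Poly_Mapping.keys q"
  have f: "finite ?S" by simp
  have "Poly_Mapping.keys (p+q) \<subseteq> ?S" by (rule keys_add)
  then show ?thesis
    by (simp add: pderivv_superset[OF f] lookup_add distrib_left single_add sum.distrib)
qed

lemma pderivv_zero [simp]: "pderivv j 0 = 0" by (simp add: pderivv_def)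

lemma pderivv_sum: "pderivv j (sum f A) = (\<Sum>x\<in>A. pderivv j (f x))"
  by (induction A rule: infinite_finite_induct) (auto simp: pderivv_add)

lemma pderivv_single:
  "pderivv j (Poly_Mapping.single m c) = Poly_Mapping.single (m - Poly_Mapping.single j 1)
            (of_nat (Poly_Mapping.lookup m j) * c)"
  by (subst pderivv_superset[of "{m}"]) auto

lemma pderivv_Const: "pderivv j (Const c * p) = Const c * pderivv j p"
proof -
  have e1: "Const c * p = (\<Sum>m\<in>Poly_Mapping.keys p. Poly_Mapping.single m (c * Poly_Mapping.lookup p m))"
    using arg_cong[OF poly_mapping_sum_rep[of p], of "\<lambda>x. Const c * x"]
    by (simp add: sum_distrib_left Const_single)
  have e2: "pderivv j p = (\<Sum>m\<in>Poly_Mapping.keys p. pderivv j (Poly_Mapping.single m (Poly_Mapping.lookup p m)))"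
    using arg_cong[OF poly_mapping_sum_rep[of p], of "pderivv j"] by (simp add: pderivv_sum)
  show ?thesis
    by (simp add: e1 e2 pderivv_sum pderivv_single sum_distrib_left Const_single mult.left_commute)
qed

lemma Dt_add: "Dt n (g + h) = Dt n g + Dt n h"
  by (simp add: Dt_def pderivv_add distrib_left sum.distrib)
lemma Dt_Const: "Dt n (Const c * g) = Const c * Dt n g"
  by (simp add: Dt_def pderivv_Const sum_distrib_left mult.left_commute)
lemma Dt'_add: "Dt' n (g + h) = Dt' n g + Dt' n h"
  by (simp add: Dt'_def pderivv_add distrib_left sum.distrib)
lemma Dt'_Const: "Dt' n (Const c * g) = Const c * Dt' n g"
  by (simp add: Dt'_def pderivv_Const sum_distrib_left mult.left_commute)



section \<open>Local nilpotency\<close>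

definition Ws :: "(nat \<Rightarrow> nat) \<Rightarrow> nat \<Rightarrow> (nat \<Rightarrow>\<^sub>0 nat) \<Rightarrow> nat" where
  "Ws \<omega> n m = (\<Sum>s\<in>{1..n}. \<omega> s * Poly_Mapping.lookup m s)"

lemma Ws_le: assumes "\<forall>j\<in>{1..n}. \<omega> j \<le> n" shows "Ws \<omega> n m \<le> n * Ws (\<lambda>_. 1) n m"
proof -
  have "Ws \<omega> n m \<le> (\<Sum>s\<in>{1..n}. n * Poly_Mapping.lookup m s)"
    unfolding Ws_def by (rule sum_mono) (use assms in auto)
  then show ?thesis by (simp add: Ws_def sum_distrib_left)
qed

lemma Ws_shift:
  assumes "j \<in> {1..n}" "j' \<in> {1..n}" "Poly_Mapping.lookup m j > 0"
  shows "Ws \<omega> n (Poly_Mapping.single j' 1 + (m - Poly_Mapping.single j 1)) + \<omega> j = Ws \<omega> n m + \<omega> j'"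
proof -
  let ?M = "Poly_Mapping.single j' 1 + (m - Poly_Mapping.single j 1)"
  have pw: "\<omega> s * Poly_Mapping.lookup ?M s + (if s = j then \<omega> s else 0)
          = \<omega> s * Poly_Mapping.lookup m s + (if s = j' then \<omega> s else 0)" for s
    using assms(3) by (auto simp: lookup_add lookup_minus lookup_single when_def algebra_simps)
  have "(\<Sum>s\<in>{1..n}. \<omega> s * Poly_Mapping.lookup ?M s + (if s = j then \<omega> s else 0))
      = (\<Sum>s\<in>{1..n}. \<omega> s * Poly_Mapping.lookup m s + (if s = j' then \<omega> s else 0))"
    using pw by simp
  then show ?thesis using assms(1,2) by (simp add: sum.distrib Ws_def)
qed

lemma Ws_shift0: "Ws \<omega> n (Poly_Mapping.single 0 l + b) = Ws \<omega> n b"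
  unfolding Ws_def by (rule sum.cong) (auto simp: lookup_add lookup_single when_def)

lemma nilpotent_from_keys:
  fixes B :: "'k::comm_ring_1 mpoly \<Rightarrow> 'k mpoly"
  assumes om: "\<forall>j\<in>{1..n}. \<omega> j \<le> n"
    and kB: "\<And>g m. m \<in> Poly_Mapping.keys (B g) \<Longrightarrow>
        \<exists>m'\<in>Poly_Mapping.keys g. Ws (\<lambda>_. 1) n m = Ws (\<lambda>_. 1) n m' \<and> Ws \<omega> n m = Ws \<omega> n m' + 1"
  shows "\<exists>N. \<forall>k\<ge>N. (B^^k) g = (0::'k::comm_ring_1 mpoly)"
proof -
  have inv: "\<forall>m\<in>Poly_Mapping.keys ((B^^k) g). \<exists>m'\<in>Poly_Mapping.keys g.
      Ws (\<lambda>_. 1) n m = Ws (\<lambda>_. 1) n m' \<and> Ws \<omega> n m = Ws \<omega> n m' + k" for k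
  proof (induction k)
    case 0 show ?case
    proof
      fix m assume "m \<in> Poly_Mapping.keys ((B^^0) g)"
      then show "\<exists>m'\<in>Poly_Mapping.keys g. Ws (\<lambda>_. 1) n m = Ws (\<lambda>_. 1) n m' \<and> Ws \<omega> n m = Ws \<omega> n m' + 0"
        by (intro bexI[of _ m]) (auto simp: funpow_0)
    qed
  next
    case (Suc k)
    show ?case
    proof
      fix m assume "m \<in> Poly_Mapping.keys ((B^^Suc k) g)"
      then have "m \<in> Poly_Mapping.keys (B ((B^^k) g))" by simp
      from kB[OF this] obtain m1 where m1: "m1 \<in> Poly_Mapping.keys ((B^^k) g)"
        "Ws (\<lambda>_. 1) n m = Ws (\<lambda>_. 1) n m1" "Ws \<omega> n m = Ws \<omega> n m1 + 1" by blast
      from Suc m1(1) obtain m' where "m' \<in> Poly_Mapping.keys g"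
        "Ws (\<lambda>_. 1) n m1 = Ws (\<lambda>_. 1) n m'" "Ws \<omega> n m1 = Ws \<omega> n m' + k" by blast
      with m1 show "\<exists>m'\<in>Poly_Mapping.keys g. Ws (\<lambda>_. 1) n m = Ws (\<lambda>_. 1) n m' \<and> Ws \<omega> n m = Ws \<omega> n m' + Suc k"
        by auto
    qed
  qed
  define M where "M = (\<Sum>m\<in>Poly_Mapping.keys g. Ws (\<lambda>_. 1) n m)"
  have Mle: "m' \<in> Poly_Mapping.keys g \<Longrightarrow> Ws (\<lambda>_. 1) n m' \<le> M" for m'
    unfolding M_def by (rule member_le_sum) auto
  show ?thesis
  proof (intro exI allI impI)
    fix k assume k: "n * M + 1 \<le> k"
    show "(B^^k) g = 0"
    proof (rule ccontr)
      assume "(B^^k) g \<noteq> 0"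
      then obtain m where m: "m \<in> Poly_Mapping.keys ((B^^k) g)"
        using keys_eq_empty by blast
      from inv[of k] m obtain m' where m': "m' \<in> Poly_Mapping.keys g"
        "Ws (\<lambda>_. 1) n m = Ws (\<lambda>_. 1) n m'" "Ws \<omega> n m = Ws \<omega> n m' + k" by blast
      have "Ws \<omega> n m \<le> n * Ws (\<lambda>_. 1) n m" by (rule Ws_le[OF om])
      also have "\<dots> \<le> n * M" using Mle[OF m'(1)] m'(2) by simp
      finally show False using m'(3) k by linarith
    qed
  qed
qed

lemma keys_pderivv:
  assumes "m \<in> Poly_Mapping.keys (pderivv j g)"
  shows "\<exists>m'\<in>Poly_Mapping.keys g. Poly_Mapping.lookup m' j > 0 \<and> m = m' - Poly_Mapping.single j 1"
proof -
  have "m \<in> (\<Union>m'\<in>Poly_Mapping.keys g. Poly_Mapping.keys (Poly_Mapping.single (m' - Poly_Mapping.single j 1)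
            (of_nat (Poly_Mapping.lookup m' j) * Poly_Mapping.lookup g m')))"
    using assms unfolding pderivv_def by (rule subsetD[OF keys_sum])
  then obtain m' where m': "m' \<in> Poly_Mapping.keys g"
    "m \<in> Poly_Mapping.keys (Poly_Mapping.single (m' - Poly_Mapping.single j 1)
            (of_nat (Poly_Mapping.lookup m' j) * Poly_Mapping.lookup g m'))"
    by blast
  have "of_nat (Poly_Mapping.lookup m' j) * Poly_Mapping.lookup g m' \<noteq> 0"
    using m'(2) by (cases "of_nat (Poly_Mapping.lookup m' j) * Poly_Mapping.lookup g m' = 0") auto
  then have "Poly_Mapping.lookup m' j \<noteq> 0" by (cases "Poly_Mapping.lookup m' j") auto
  moreover have "m = m' - Poly_Mapping.single j 1"
    using m'(2) by (cases "of_nat (Poly_Mapping.lookup m' j) * Poly_Mapping.lookup g m' = 0") auto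
  ultimately show ?thesis using m'(1) by blast
qed

lemma keys_single_mult:
  assumes "m \<in> Poly_Mapping.keys (Poly_Mapping.single a c * f)"
  shows "\<exists>b\<in>Poly_Mapping.keys f. m = a + b"
  using keys_mult[of "Poly_Mapping.single a c" f] assms by (auto split: if_splits)

lemma of_nat_Var: "(of_nat c :: 'k::comm_ring_1 mpoly) * Var j = Poly_Mapping.single (Poly_Mapping.single j 1) (of_nat c)"
  by (simp add: Var_def mult_single flip: single_of_nat)

lemma Var0_pow: "(Var 0 :: 'k::comm_ring_1 mpoly) ^ l = Poly_Mapping.single (Poly_Mapping.single 0 l) 1"
  by (induction l) (simp_all add: Var_def mult_single single_add[symmetric])

lemma keys_Dt:
  assumes "m \<in> Poly_Mapping.keys (Dt n g)"
  shows "\<exists>j\<in>{1..n-1}. \<exists>m'\<in>Poly_Mapping.keys g. Poly_Mapping.lookup m' j > 0 \<and>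
          m = Poly_Mapping.single (j+1) 1 + (m' - Poly_Mapping.single j 1)"
proof -
  have "m \<in> (\<Union>j\<in>{1..n-1}. Poly_Mapping.keys (of_nat (n - j) * Var (j + 1) * pderivv j g))"
    using assms unfolding Dt_def by (rule subsetD[OF keys_sum])
  then obtain j where j: "j \<in> {1..n-1}"
    "m \<in> Poly_Mapping.keys (of_nat (n - j) * Var (j + 1) * pderivv j g)"
    by blast
  note j(2)[unfolded of_nat_Var]
  from keys_single_mult[OF this] obtain b where "b \<in> Poly_Mapping.keys (pderivv j g)" "m = Poly_Mapping.single (j+1) 1 + b"
    by blast
  with keys_pderivv j(1) show ?thesis by blast
qed

lemma keys_Dt':
  assumes "m \<in> Poly_Mapping.keys (Dt' n g)"
  shows "\<exists>j\<in>{2..n}. \<exists>m'\<in>Poly_Mapping.keys g. Poly_Mapping.lookup m' j > 0 \<and>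
          m = Poly_Mapping.single (j-1) 1 + (m' - Poly_Mapping.single j 1)"
proof -
  have "m \<in> (\<Union>j\<in>{2..n}. Poly_Mapping.keys (of_nat (j - 1) * Var (j - 1) * pderivv j g))"
    using assms unfolding Dt'_def by (rule subsetD[OF keys_sum])
  then obtain j where j: "j \<in> {2..n}"
    "m \<in> Poly_Mapping.keys (of_nat (j - 1) * Var (j - 1) * pderivv j g)"
    by blast
  note j(2)[unfolded of_nat_Var]
  from keys_single_mult[OF this] obtain b where "b \<in> Poly_Mapping.keys (pderivv j g)" "m = Poly_Mapping.single (j-1) 1 + b"
    by blast
  with keys_pderivv j(1) show ?thesis by blast
qed

lemma nilp_Dt: "\<exists>N. \<forall>k\<ge>N. ((\<lambda>g. Var 0 ^ l * Dt n g)^^k) g = (0::'k::comm_ring_1 mpoly)"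
proof (rule nilpotent_from_keys[where \<omega>="\<lambda>j. j" and n=n])
  fix g :: "'k mpoly" and m
  assume "m \<in> Poly_Mapping.keys (Var 0 ^ l * Dt n g)"
  then obtain b where b: "b \<in> Poly_Mapping.keys (Dt n g)" "m = Poly_Mapping.single 0 l + b"
    using keys_single_mult by (fastforce simp: Var0_pow)
  from keys_Dt[OF b(1)] obtain j m' where jm: "j\<in>{1..n-1}" "m'\<in>Poly_Mapping.keys g"
    "Poly_Mapping.lookup m' j > 0" "b = Poly_Mapping.single (j+1) 1 + (m' - Poly_Mapping.single j 1)"
    by blast
  have j1: "j \<in> {1..n}" "j+1 \<in> {1..n}" using jm(1) by auto
  have "Ws (\<lambda>_. 1) n m = Ws (\<lambda>_. 1) n m'" "Ws (\<lambda>j. j) n m = Ws (\<lambda>j. j) n m' + 1"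
    using Ws_shift[OF j1 jm(3), of "\<lambda>_. 1"] Ws_shift[OF j1 jm(3), of "\<lambda>j. j"]
    by (simp_all add: b(2) Ws_shift0 jm(4))
  then show "\<exists>m'\<in>Poly_Mapping.keys g. Ws (\<lambda>_. 1) n m = Ws (\<lambda>_. 1) n m' \<and> Ws (\<lambda>j. j) n m = Ws (\<lambda>j. j) n m' + 1"
    using jm(2) by blast
qed auto

lemma nilp_Dt': "\<exists>N. \<forall>k\<ge>N. ((Dt' n)^^k) g = (0::'k::comm_ring_1 mpoly)"
proof (rule nilpotent_from_keys[where \<omega>="\<lambda>j. n + 1 - j" and n=n])
  fix g :: "'k mpoly" and m
  assume "m \<in> Poly_Mapping.keys (Dt' n g)"
  from keys_Dt'[OF this] obtain j m' where jm: "j\<in>{2..n}" "m'\<in>Poly_Mapping.keys g"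
    "Poly_Mapping.lookup m' j > 0" "m = Poly_Mapping.single (j-1) 1 + (m' - Poly_Mapping.single j 1)"
    by blast
  have j1: "j \<in> {1..n}" "j-1 \<in> {1..n}" using jm(1) by auto
  have h1: "Ws (\<lambda>_. 1) n m = Ws (\<lambda>_. 1) n m'"
    using Ws_shift[OF j1 jm(3), of "\<lambda>_. 1"] by (simp add: jm(4))
  have h2: "Ws (\<lambda>j. n + 1 - j) n m + (n + 1 - j) = Ws (\<lambda>j. n + 1 - j) n m' + (n + 1 - (j - 1))"
    using Ws_shift[OF j1 jm(3), of "\<lambda>j. n + 1 - j"] by (simp only: jm(4))
  have "n + 1 - (j - 1) = (n + 1 - j) + 1" using jm(1) by auto
  with h1 h2 have "Ws (\<lambda>_. 1) n m = Ws (\<lambda>_. 1) n m'" "Ws (\<lambda>j. n + 1 - j) n m = Ws (\<lambda>j. n + 1 - j) n m' + 1"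
    by linarith+
  then show "\<exists>m'\<in>Poly_Mapping.keys g. Ws (\<lambda>_. 1) n m = Ws (\<lambda>_. 1) n m' \<and> Ws (\<lambda>j. n + 1 - j) n m = Ws (\<lambda>j. n + 1 - j) n m' + 1"
    using jm(2) by blast
qed auto




section \<open>Exponentials\<close>

definition good :: "('k::field_char_0 mpoly \<Rightarrow> 'k mpoly) \<Rightarrow> bool" where
  "good B \<longleftrightarrow> (\<forall>g h. B (g + h) = B g + B h) \<and> (\<forall>c g. B (Const c * g) = Const c * B g)
     \<and> (\<forall>g. \<exists>N. \<forall>k\<ge>N. (B^^k) g = 0)"

definition expA :: "('k::field_char_0 mpoly \<Rightarrow> 'k mpoly) \<Rightarrow> 'k \<Rightarrow> 'k mpoly \<Rightarrow> 'k mpoly" where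
  "expA B a = expE (\<lambda>g. Const a * B g)"

lemma expE_eq:
  fixes E :: "'k::field_char_0 mpoly \<Rightarrow> 'k mpoly"
  assumes "\<forall>m\<ge>N. (E^^m) g = 0"
  shows "expE E g = (\<Sum>i<N. Const (1 / fact i) * (E^^i) g)"
proof -
  define L where "L = (LEAST N. \<forall>m\<ge>N. (E^^m) g = 0)"
  have L: "\<forall>m\<ge>L. (E^^m) g = 0" unfolding L_def by (rule LeastI[of _ N]) (rule assms)
  have LN: "L \<le> N" unfolding L_def by (rule Least_le) (rule assms)
  have e: "expE E g = (\<Sum>i<L. Const (1/fact i) * (E^^i) g)" by (simp only: expE_def L_def)
  have "(\<Sum>i<L. Const (1/fact i) * (E^^i) g) = (\<Sum>i<N. Const (1/fact i) * (E^^i) g)"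
  proof (rule sum.mono_neutral_left)
    show "finite {..<N}" by simp
    show "{..<L} \<subseteq> {..<N}" using LN by auto
    show "\<forall>i\<in>{..<N} - {..<L}. Const (1/fact i) * (E^^i) g = 0"
    proof
      fix i assume "i \<in> {..<N} - {..<L}"
      then have "i \<ge> L" by simp
      with L have "(E^^i) g = 0" by blast
      then show "Const (1/fact i) * (E^^i) g = 0" by simp
    qed
  qed
  with e show ?thesis by simp
qed

lemma good_add: "good B \<Longrightarrow> B (g + h) = B g + B h" by (simp add: good_def)
lemma good_Const: "good B \<Longrightarrow> B (Const c * g) = Const c * B g" by (simp add: good_def)
lemma good_zero: "good B \<Longrightarrow> B 0 = 0"
  using good_add[of B 0 0] by simp
lemma good_nilp: "good B \<Longrightarrow> \<exists>N. \<forall>k\<ge>N. (B^^k) g = 0" by (simp add: good_def)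

lemma good_pow_add: "good B \<Longrightarrow> (B^^k) (g + h) = (B^^k) g + (B^^k) h"
  by (induction k) (simp_all add: good_add)
lemma good_pow_Const: "good B \<Longrightarrow> (B^^k) (Const c * g) = Const c * (B^^k) g"
  by (induction k) (simp_all add: good_Const)
lemma good_pow_zero: "good B \<Longrightarrow> (B^^k) 0 = 0"
  by (induction k) (simp_all add: good_zero)
lemma good_pow_sum: "good B \<Longrightarrow> (B^^k) (sum f A) = (\<Sum>x\<in>A. (B^^k) (f x))"
  by (induction A rule: infinite_finite_induct) (simp_all add: good_pow_zero good_pow_add)

lemma funpow_A: "good B \<Longrightarrow> ((\<lambda>g. Const a * B g)^^k) g = Const (a^k) * (B^^k) g"
  by (induction k) (simp_all add: good_Const Const_mult mult.assoc[symmetric] mult.commute)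

lemma expA_eq:
  assumes "good B" "\<forall>m\<ge>N. (B^^m) g = 0"
  shows "expA B a g = (\<Sum>i<N. Const (a^i / fact i) * (B^^i) g)"
proof -
  have "\<forall>m\<ge>N. ((\<lambda>g. Const a * B g)^^m) g = 0"
    using assms by (simp add: funpow_A)
  then show ?thesis
    unfolding expA_def
    by (simp add: expE_eq funpow_A[OF assms(1)] mult.assoc[symmetric] Const_mult)
qed

lemma expA_0: assumes "good B" shows "expA B 0 g = g"
proof -
  obtain N where N: "\<forall>m\<ge>N. (B^^m) g = 0" using good_nilp[OF assms] by blast
  then have "\<forall>m\<ge>Suc N. (B^^m) g = 0" by simp
  from expA_eq[OF assms this, of 0] show ?thesis
    by (simp add: sum.lessThan_Suc_shift del: sum.lessThan_Suc)
qed

lemma binom_exp_coeff: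
  "(\<Sum>i\<le>k. (a::'k::field_char_0)^i / fact i * (b^(k-i) / fact (k-i))) = (a+b)^k / fact k"
proof -
  have "(a+b)^k / fact k = (\<Sum>i\<le>k. of_nat (k choose i) * a^i * b^(k-i) / fact k)"
    by (simp add: binomial_ring sum_divide_distrib)
  also have "\<dots> = (\<Sum>i\<le>k. a^i / fact i * (b^(k-i) / fact (k-i)))"
  proof (rule sum.cong[OF refl])
    fix i assume "i \<in> {..k}"
    then have "i \<le> k" by simp
    then show "of_nat (k choose i) * a^i * b^(k-i) / fact k = a^i / fact i * (b^(k-i) / fact (k-i))"
      by (simp add: binomial_fact field_simps)
  qed
  finally show ?thesis by simp
qed

lemma expA_add:
  assumes good: "good B"
  shows "expA B a (expA B b g) = expA B (a+b) g"
proof -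
  obtain N where N: "\<forall>m\<ge>N. (B^^m) g = 0" using good_nilp[OF good] by blast
  define h where "h = (\<Sum>j<N. Const (b^j/fact j) * (B^^j) g)"
  have eh: "expA B b g = h" using expA_eq[OF good N] h_def by simp
  have fa: "(B^^m) ((B^^j) g) = (B^^(m+j)) g" for m j by (simp add: funpow_add)
  have Bh: "(B^^m) h = (\<Sum>j<N. Const (b^j/fact j) * (B^^(m+j)) g)" for m
    unfolding h_def by (simp add: good_pow_sum[OF good] good_pow_Const[OF good] fa)
  have hN: "\<forall>m\<ge>N. (B^^m) h = 0" using Bh N by simp
  have "expA B a (expA B b g) = (\<Sum>i<N. Const (a^i/fact i) * (B^^i) h)"
    unfolding eh by (rule expA_eq[OF good hN])
  also have "\<dots> = (\<Sum>i<N. \<Sum>j<N. Const (a^i/fact i * (b^j/fact j)) * (B^^(i+j)) g)"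
    by (simp add: Bh sum_distrib_left mult.assoc[symmetric] Const_mult)
  also have "\<dots> = (\<Sum>(i,j)\<in>{..<N}\<times>{..<N}. Const (a^i/fact i * (b^j/fact j)) * (B^^(i+j)) g)"
    by (simp add: sum.cartesian_product)
  also have "\<dots> = (\<Sum>(i,j)\<in>{(i,j). i+j<N}. Const (a^i/fact i * (b^j/fact j)) * (B^^(i+j)) g)"
    by (rule sum.mono_neutral_right) (auto, meson N not_le)
  also have "\<dots> = (\<Sum>k<N. \<Sum>i\<le>k. Const (a^i/fact i * (b^(k-i)/fact (k-i))) * (B^^(i+(k-i))) g)"
    by (rule sum.triangle_reindex)
  also have "\<dots> = (\<Sum>k<N. Const ((a+b)^k/fact k) * (B^^k) g)"
  proof (rule sum.cong[OF refl])
    fix k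
    have "(\<Sum>i\<le>k. Const (a^i/fact i * (b^(k-i)/fact (k-i))) * (B^^(i+(k-i))) g)
        = (\<Sum>i\<le>k. Const (a^i/fact i * (b^(k-i)/fact (k-i))) * (B^^k) g)"
      by (rule sum.cong) auto
    also have "\<dots> = Const (\<Sum>i\<le>k. a^i/fact i * (b^(k-i)/fact (k-i))) * (B^^k) g"
      by (simp only: Const_sum sum_distrib_right)
    also have "\<dots> = Const ((a+b)^k/fact k) * (B^^k) g"
      by (simp only: binom_exp_coeff)
    finally show "(\<Sum>i\<le>k. Const (a^i/fact i * (b^(k-i)/fact (k-i))) * (B^^(i+(k-i))) g)
        = Const ((a+b)^k/fact k) * (B^^k) g" .
  qed
  also have "\<dots> = expA B (a+b) g" by (rule expA_eq[OF good N, symmetric])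
  finally show ?thesis .
qed

lemma conj_pow:
  assumes gB: "good B" and gC: "good C"
  shows "ipow (expA C 1 \<circ> expA B 1 \<circ> expA C (-1)) d = expA C 1 \<circ> expA B (of_int d) \<circ> expA C (-1)"
proof -
  let ?\<Phi> = "expA C 1 \<circ> expA B 1 \<circ> expA C (-1)"
  let ?\<Psi> = "expA C 1 \<circ> expA B (-1) \<circ> expA C (-1)"
  have CC: "expA C (-1) (expA C 1 x) = x" "expA C 1 (expA C (-1) x) = x" for x
    using expA_add[OF gC, of "-1" 1 x] expA_add[OF gC, of 1 "-1" x] expA_0[OF gC] by simp_all
  have BB: "expA B a (expA B b x) = expA B (a+b) x" for a b x by (rule expA_add[OF gB])
  have pos: "(?\<Phi>^^k) = expA C 1 \<circ> expA B (of_nat k) \<circ> expA C (-1)" for k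
  proof (induction k)
    case 0 show ?case by (rule ext) (simp add: expA_0[OF gB] CC)
  next
    case (Suc k)
    show ?case unfolding funpow.simps(2) Suc.IH by (rule ext) (simp add: CC BB)
  qed
  have inv: "inv ?\<Phi> = ?\<Psi>"
  proof (rule inv_unique_comp)
    show "?\<Phi> \<circ> ?\<Psi> = id" by (rule ext) (simp add: CC BB expA_0[OF gB])
    show "?\<Psi> \<circ> ?\<Phi> = id" by (rule ext) (simp add: CC BB expA_0[OF gB])
  qed
  have neg0: "(?\<Psi>^^k) = expA C 1 \<circ> expA B (- of_nat k) \<circ> expA C (-1)" for k
  proof (induction k)
    case 0 show ?case by (rule ext) (simp add: expA_0[OF gB] CC)
  next
    case (Suc k)
    show ?case unfolding funpow.simps(2) Suc.IH by (rule ext) (simp add: CC BB)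
  qed
  have neg: "((inv ?\<Phi>)^^k) = expA C 1 \<circ> expA B (- of_nat k) \<circ> expA C (-1)" for k
    unfolding inv by (rule neg0)
  show ?thesis
  proof (cases "d \<ge> 0")
    case True
    then show ?thesis by (simp add: ipow_def pos)
  next
    case False
    then have "(- of_nat (nat (- d)) :: 'a) = of_int d" by simp
    with False show ?thesis by (simp add: ipow_def neg)
  qed
qed


definition Bs :: "nat \<Rightarrow> nat \<Rightarrow> 'k::field_char_0 mpoly \<Rightarrow> 'k mpoly" where
  "Bs n l = (\<lambda>g. Var 0 ^ l * Dt n g)"

lemma good_Bs: "good (Bs n l)"
  unfolding good_def Bs_def by (simp add: Dt_add Dt_Const distrib_left mult.left_commute nilp_Dt)

lemma good_Dt': "good (Dt' n)"
  unfolding good_def by (simp add: Dt'_add Dt'_Const nilp_Dt')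

lemma phi_expA: "phi n l = expA (Bs n l) 1 \<circ> expA (Dt' n) 1 \<circ> expA (Bs n l) (-1)"
  unfolding phi_def eps_def eps'_def expA_def Bs_def by (simp add: Const_uminus)

lemma ipow_phi: "ipow (phi n l) d = expA (Bs n l) 1 \<circ> expA (Dt' n) (of_int d) \<circ> expA (Bs n l) (-1)"
  unfolding phi_expA by (rule conj_pow[OF good_Dt' good_Bs])




section \<open>Embedding univariate polynomials in t\<close>

definition emb :: "'k::comm_ring_1 poly \<Rightarrow> 'k mpoly" where
  "emb p = poly (map_poly Const p) (Var 0)"

lemma Const_eq_0_iff: "Const x = 0 \<longleftrightarrow> x = 0"
  by (metis Const_def lookup_single_eq single_zero)

lemma map_poly_Const_add: "map_poly Const (p + q) = map_poly Const p + map_poly Const q"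
  by (rule poly_eqI) (simp add: coeff_map_poly Const_add)
lemma map_poly_Const_mult: "map_poly Const (p * q) = map_poly Const p * map_poly Const q"
  by (rule poly_eqI) (simp add: coeff_map_poly coeff_mult Const_sum Const_mult)

lemma emb_add: "emb (p + q) = emb p + emb q" by (simp add: emb_def map_poly_Const_add)
lemma emb_mult: "emb (p * q) = emb p * emb q" by (simp add: emb_def map_poly_Const_mult)
lemma emb_0 [simp]: "emb 0 = 0" by (simp add: emb_def)
lemma emb_1 [simp]: "emb 1 = 1" by (simp add: emb_def)
lemma emb_sum: "emb (sum f A) = (\<Sum>x\<in>A. emb (f x))"
  by (induction A rule: infinite_finite_induct) (auto simp: emb_add)
lemma emb_const: "emb [:c:] = Const c" by (simp add: emb_def map_poly_pCons)
lemma emb_smult: "emb (smult c p) = Const c * emb p"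
proof -
  have "smult c p = [:c:] * p" by simp
  then show ?thesis by (simp only: emb_mult emb_const)
qed
lemma emb_X: "emb [:0, 1:] = Var 0" by (simp add: emb_def map_poly_pCons)
lemma emb_monom: "emb (monom c k) = Poly_Mapping.single (Poly_Mapping.single 0 k) c"
proof -
  have "emb ([:0, 1:] ^ k) = Var 0 ^ k"
    by (induction k) (simp_all only: power_Suc emb_mult emb_X power_0 emb_1)
  then have h: "emb ([:0, 1:] ^ k) = Poly_Mapping.single (Poly_Mapping.single 0 k) 1" by (simp only: Var0_pow)
  show ?thesis unfolding monom_altdef emb_smult h Const_single by simp
qed
lemma emb_of_nat: "emb (of_nat c) = of_nat c"
  by (induction c) (simp_all add: emb_add)

lemma emb_rep: "emb p = (\<Sum>i\<le>degree p. Poly_Mapping.single (Poly_Mapping.single 0 i) (coeff p i))"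
proof -
  have dg: "degree (map_poly Const p) = degree p"
    by (rule degree_map_poly) (simp add: Const_eq_0_iff)
  show ?thesis
    unfolding emb_def poly_altdef dg
    by (simp add: coeff_map_poly Var0_pow Const_single)
qed

section \<open>Linear forms\<close>

definition L :: "nat \<Rightarrow> (nat \<Rightarrow> 'k::comm_ring_1 poly) \<Rightarrow> 'k mpoly" where
  "L n v = (\<Sum>j\<in>{1..n}. emb (v j) * Var j)"

lemma emb_Var_rep:
  "emb q * Var s = (\<Sum>i\<le>degree q. Poly_Mapping.single (Poly_Mapping.single 0 i + Poly_Mapping.single s 1) (coeff q i))"
  by (simp add: emb_rep sum_distrib_right Var_def mult_single)

lemma pderivv_emb_Var:
  assumes "j \<ge> 1"
  shows "pderivv j (emb q * Var s) = (if s = j then emb q else 0)"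
proof -
  have lk: "Poly_Mapping.lookup (Poly_Mapping.single 0 i + Poly_Mapping.single s 1) j = (if s = j then 1 else 0)" for i
    using assms by (simp add: lookup_add lookup_single when_def)
  show ?thesis
  proof (cases "s = j")
    case True
    show ?thesis
      unfolding emb_Var_rep pderivv_sum pderivv_single lk using True
      by (simp add: emb_rep)
  next
    case False
    show ?thesis
      unfolding emb_Var_rep pderivv_sum pderivv_single lk using False
      by simp
  qed
qed

lemma pderivv_L:
  assumes "j \<in> {1..n}"
  shows "pderivv j (L n v) = emb (v j)"
proof -
  have "pderivv j (L n v) = (\<Sum>s\<in>{1..n}. if s = j then emb (v s) else 0)"
    unfolding L_def pderivv_sum using assms by (simp add: pderivv_emb_Var)
  also have "\<dots> = emb (v j)" using assms by simp
  finally show ?thesis .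
qed

lemma L_cong: "(\<And>s. s \<in> {1..n} \<Longrightarrow> v s = w s) \<Longrightarrow> L n v = L n w"
  unfolding L_def by (rule sum.cong) auto

lemma L_zero: "L n (\<lambda>s. 0) = 0" by (simp add: L_def)

lemma L_Var: assumes "i \<in> {1..n}" shows "L n (\<lambda>s. if s = i then 1 else 0) = Var i"
proof -
  have "L n (\<lambda>s. if s = i then 1 else 0) = (\<Sum>s\<in>{1..n}. if s = i then Var s else 0)"
    unfolding L_def by (rule sum.cong) auto
  also have "\<dots> = Var i" using assms by simp
  finally show ?thesis .
qed

lemma L_sum: "L n (\<lambda>s. \<Sum>x\<in>A. f x s) = (\<Sum>x\<in>A. L n (f x))"
  unfolding L_def emb_sum sum_distrib_right by (rule sum.swap)

lemma L_smult: "Const c * L n v = L n (\<lambda>s. smult c (v s))"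
  unfolding L_def by (simp add: emb_smult sum_distrib_left mult.assoc)

lemma sum_shift1:
  fixes f :: "nat \<Rightarrow> 'a::comm_monoid_add"
  assumes "n \<ge> 1" "f 1 = 0"
  shows "(\<Sum>s\<in>{1..n}. f s) = (\<Sum>j\<in>{1..n-1}. f (j+1))"
proof -
  obtain n' where n: "n = Suc n'" using assms(1) by (cases n) auto
  have "(\<Sum>s\<in>{1..n}. f s) = f 1 + (\<Sum>s\<in>{Suc 1..Suc n'}. f s)"
    unfolding n by (rule sum.atLeast_Suc_atMost) simp
  also have "\<dots> = (\<Sum>j\<in>{1..n'}. f (Suc j))"
    using assms(2) by (simp only: sum.shift_bounds_cl_Suc_ivl) simp
  finally show ?thesis by (simp add: n)
qed

lemma sum_drop_last:
  fixes f :: "nat \<Rightarrow> 'a::comm_monoid_add"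
  assumes "n \<ge> 1" "f n = 0"
  shows "(\<Sum>s\<in>{1..n}. f s) = (\<Sum>s\<in>{1..n-1}. f s)"
proof -
  obtain n' where n: "n = Suc n'" using assms(1) by (cases n) auto
  show ?thesis using assms(2) unfolding n by (subst sum.nat_ivl_Suc') auto
qed

definition TT :: "nat \<Rightarrow> nat \<Rightarrow> (nat \<Rightarrow> 'k::comm_ring_1 poly) \<Rightarrow> nat \<Rightarrow> 'k poly" where
  "TT n l v s = (if 2 \<le> s \<and> s \<le> n then monom (of_nat (n - s + 1)) l * v (s - 1) else 0)"

definition TD :: "nat \<Rightarrow> (nat \<Rightarrow> 'k::comm_ring_1 poly) \<Rightarrow> nat \<Rightarrow> 'k poly" where
  "TD n v s = (if 1 \<le> s \<and> s < n then of_nat s * v (s + 1) else 0)"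

lemma Bs_L:
  assumes "n \<ge> 1"
  shows "Bs n l (L n v) = L n (TT n l v)"
proof -
  have "Bs n l (L n v) = Var 0 ^ l * (\<Sum>j\<in>{1..n-1}. of_nat (n - j) * Var (j + 1) * emb (v j))"
    unfolding Bs_def Dt_def by (intro arg_cong[where f="\<lambda>x. Var 0 ^ l * x"] sum.cong) (auto simp: pderivv_L)
  also have "\<dots> = (\<Sum>j\<in>{1..n-1}. emb (TT n l v (j+1)) * Var (j+1))"
    unfolding sum_distrib_left
  proof (rule sum.cong[OF refl])
    fix j assume j: "j \<in> {1..n-1}"
    then have t: "TT n l v (j+1) = monom (of_nat (n - j)) l * v j"
      by (auto simp: TT_def)
    have e: "emb (monom (of_nat (n - j)) l) = of_nat (n - j) * Var 0 ^ l"
      by (simp add: emb_monom Var0_pow mult_single flip: single_of_nat)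
    have x: "emb (TT n l v (j+1)) * Var (j+1) = of_nat (n - j) * Var 0 ^ l * emb (v j) * Var (j+1)"
      unfolding t emb_mult e ..
    show "Var 0 ^ l * (of_nat (n - j) * Var (j + 1) * emb (v j)) = emb (TT n l v (j+1)) * Var (j+1)"
      unfolding x by (simp add: ac_simps)
  qed
  also have "\<dots> = L n (TT n l v)"
    unfolding L_def by (rule sum_shift1[symmetric]) (use assms in \<open>auto simp: TT_def\<close>)
  finally show ?thesis .
qed

lemma Dt'_L:
  assumes "n \<ge> 1"
  shows "Dt' n (L n v) = L n (TD n v)"
proof -
  have "Dt' n (L n v) = (\<Sum>j\<in>{2..n}. of_nat (j - 1) * Var (j - 1) * emb (v j))"
    unfolding Dt'_def by (rule sum.cong) (auto simp: pderivv_L)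
  also have "\<dots> = (\<Sum>s\<in>{1..n-1}. of_nat s * Var s * emb (v (s+1)))"
  proof -
    obtain n' where n: "n = Suc n'" using assms by (cases n) auto
    show ?thesis unfolding n using sum.shift_bounds_cl_Suc_ivl[of "\<lambda>j. of_nat (j - 1) * Var (j - 1) * emb (v j)" 1 n']
      by (simp add: numeral_2_eq_2)
  qed
  also have "\<dots> = (\<Sum>s\<in>{1..n-1}. emb (TD n v s) * Var s)"
    by (rule sum.cong) (auto simp: TD_def emb_mult emb_of_nat ac_simps)
  also have "\<dots> = L n (TD n v)"
    unfolding L_def by (rule sum_drop_last[symmetric]) (use assms in \<open>auto simp: TD_def\<close>)
  finally show ?thesis .
qed




lemma L_rep: "L n v = (\<Sum>j\<in>{1..n}. \<Sum>i\<le>degree (v j).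
    Poly_Mapping.single (Poly_Mapping.single 0 i + Poly_Mapping.single j 1) (coeff (v j) i))"
  unfolding L_def emb_Var_rep ..

lemma lookup_mon0: "(j::nat) \<ge> 1 \<Longrightarrow> Poly_Mapping.lookup (Poly_Mapping.single 0 i + Poly_Mapping.single j (1::nat)) 0 = i"
  by (simp add: lookup_add lookup_single when_def)
lemma lookup_monj: "(j::nat) \<ge> 1 \<Longrightarrow> Poly_Mapping.lookup (Poly_Mapping.single 0 i + Poly_Mapping.single j' (1::nat)) j = (if j' = j then 1 else 0)"
  by (simp add: lookup_add lookup_single when_def)

lemma mon_eq:
  fixes j j' :: nat
  assumes "j \<ge> 1" "j' \<ge> 1"
  shows "(Poly_Mapping.single 0 i + Poly_Mapping.single j (1::nat) = Poly_Mapping.single 0 i' + Poly_Mapping.single j' 1)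
     \<longleftrightarrow> (i = i' \<and> j = j')"
proof
  assume e: "Poly_Mapping.single 0 i + Poly_Mapping.single j (1::nat) = Poly_Mapping.single 0 i' + Poly_Mapping.single j' 1"
  have a1: "Poly_Mapping.lookup (Poly_Mapping.single 0 i + Poly_Mapping.single j (1::nat)) 0 = i"
    using assms(1) by (rule lookup_mon0)
  have a2: "Poly_Mapping.lookup (Poly_Mapping.single 0 i' + Poly_Mapping.single j' (1::nat)) 0 = i'"
    using assms(2) by (rule lookup_mon0)
  have ii: "i = i'" using arg_cong[OF e, of "\<lambda>m. Poly_Mapping.lookup m 0"] a1 a2 by simp
  have b1: "Poly_Mapping.lookup (Poly_Mapping.single 0 i + Poly_Mapping.single j (1::nat)) j = 1"
    using lookup_monj[OF assms(1), of i j] by simp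
  have b2: "Poly_Mapping.lookup (Poly_Mapping.single 0 i' + Poly_Mapping.single j' (1::nat)) j = (if j' = j then 1 else 0)"
    using assms(1) by (rule lookup_monj)
  have "j = j'"
  proof (rule ccontr)
    assume "j \<noteq> j'"
    then have "Poly_Mapping.lookup (Poly_Mapping.single 0 i' + Poly_Mapping.single j' (1::nat)) j = 0"
      using b2 by simp
    then show False using arg_cong[OF e, of "\<lambda>m. Poly_Mapping.lookup m j"] b1 by simp
  qed
  with ii show "i = i' \<and> j = j'" ..
next
  assume "i = i' \<and> j = j'"
  then show "Poly_Mapping.single 0 i + Poly_Mapping.single j (1::nat) = Poly_Mapping.single 0 i' + Poly_Mapping.single j' 1"
    by simp
qed

lemma lookup_L:
  assumes j: "j \<in> {1..n}"
  shows "Poly_Mapping.lookup (L n v) (Poly_Mapping.single 0 k + Poly_Mapping.single j 1) = coeff (v j) k"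
proof -
  have j1: "j \<ge> 1" using j by simp
  have "Poly_Mapping.lookup (L n v) (Poly_Mapping.single 0 k + Poly_Mapping.single j 1)
      = (\<Sum>j'\<in>{1..n}. \<Sum>i\<le>degree (v j'). if i = k \<and> j' = j then coeff (v j') i else 0)"
    unfolding L_rep lookup_sum
  proof (intro sum.cong refl)
    fix j' i assume "j' \<in> {1..n}" "i \<in> {..degree (v j')}"
    then have j1': "j' \<ge> 1" by simp
    show "Poly_Mapping.lookup (Poly_Mapping.single (Poly_Mapping.single 0 i + Poly_Mapping.single j' 1) (coeff (v j') i))
        (Poly_Mapping.single 0 k + Poly_Mapping.single j 1) = (if i = k \<and> j' = j then coeff (v j') i else 0)"
      unfolding lookup_single when_def mon_eq[OF j1' j1] ..
  qed
  also have "\<dots> = (\<Sum>j'\<in>{1..n}. if j' = j then (\<Sum>i\<le>degree (v j'). if i = k then coeff (v j') i else 0) else 0)"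
  proof (rule sum.cong[OF refl])
    fix j' show "(\<Sum>i\<le>degree (v j'). if i = k \<and> j' = j then coeff (v j') i else 0)
       = (if j' = j then (\<Sum>i\<le>degree (v j'). if i = k then coeff (v j') i else 0) else 0)"
      by (cases "j' = j") simp_all
  qed
  also have "\<dots> = (\<Sum>i\<le>degree (v j). if i = k then coeff (v j) i else 0)"
    using j by (simp only: sum.delta finite_atLeastAtMost if_True)
  also have "\<dots> = coeff (v j) k"
    by (cases "k \<le> degree (v j)") (simp_all add: coeff_eq_0)
  finally show ?thesis .
qed

lemma keys_L:
  assumes "m \<in> Poly_Mapping.keys (L n v)"
  shows "\<exists>j\<in>{1..n}. \<exists>k. m = Poly_Mapping.single 0 k + Poly_Mapping.single j 1 \<and> coeff (v j) k \<noteq> 0"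
proof -
  have "m \<in> (\<Union>j\<in>{1..n}. Poly_Mapping.keys (\<Sum>i\<le>degree (v j).
    Poly_Mapping.single (Poly_Mapping.single 0 i + Poly_Mapping.single j 1) (coeff (v j) i)))"
    using assms unfolding L_rep by (rule subsetD[OF keys_sum])
  then obtain j where j: "j \<in> {1..n}" "m \<in> Poly_Mapping.keys (\<Sum>i\<le>degree (v j).
    Poly_Mapping.single (Poly_Mapping.single 0 i + Poly_Mapping.single j 1) (coeff (v j) i))" by blast
  have "m \<in> (\<Union>i\<in>{..degree (v j)}. Poly_Mapping.keys (
    Poly_Mapping.single (Poly_Mapping.single 0 i + Poly_Mapping.single j 1) (coeff (v j) i)))"
    using j(2) by (rule subsetD[OF keys_sum])
  then obtain k where k: "m \<in> Poly_Mapping.keys (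
    Poly_Mapping.single (Poly_Mapping.single 0 k + Poly_Mapping.single j 1) (coeff (v j) k))"
    by blast
  have "m = Poly_Mapping.single 0 k + Poly_Mapping.single j 1"
    using k by (cases "coeff (v j) k = 0") simp_all
  moreover have "coeff (v j) k \<noteq> 0"
    using assms lookup_L[OF j(1), of v k] calculation by (simp add: in_keys_iff)
  ultimately show ?thesis using j(1) by blast
qed

lemma expA_L:
  assumes good: "good B" and BL: "\<And>w. B (L n w) = L n (T w)"
    and nil: "\<And>m s. m \<ge> N \<Longrightarrow> s \<in> {1..n} \<Longrightarrow> (T^^m) v s = 0"
  shows "expA B a (L n v) = L n (\<lambda>s. \<Sum>i<N. smult (a^i/fact i) ((T^^i) v s))"
proof -
  have p: "(B^^m) (L n v) = L n ((T^^m) v)" for m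
    by (induction m) (simp_all add: BL)
  have z: "\<forall>m\<ge>N. (B^^m) (L n v) = 0"
  proof (intro allI impI)
    fix m assume "m \<ge> N"
    then have "L n ((T^^m) v) = L n (\<lambda>s. 0)" by (intro L_cong) (simp add: nil)
    then show "(B^^m) (L n v) = 0" by (simp add: p L_zero)
  qed
  show ?thesis
    unfolding expA_eq[OF good z] p L_smult L_sum ..
qed

lemma TT_pow:
  assumes "s \<in> {1..n}"
  shows "(TT n l ^^ k) v s = (if k < s then monom (\<Prod>r<k. of_nat (n - s + 1 + r)) (l*k) * v (s - k) else 0)"
  using assms
proof (induction k arbitrary: s)
  case 0 then show ?case by simp
next
  case (Suc k)
  show ?case
  proof (cases "2 \<le> s")
    case False
    then show ?thesis using Suc.prems by (simp add: TT_def)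
  next
    case True
    have s1: "s - 1 \<in> {1..n}" using True Suc.prems by auto
    have ix: "n - (s - 1) + 1 + r = n - s + 1 + Suc r" for r using True Suc.prems by simp
    have pr: "(\<Prod>r<Suc k. of_nat (n - s + 1 + r)) = (of_nat (n - s + 1) :: 'a) * (\<Prod>r<k. of_nat (n - (s - 1) + 1 + r))"
      unfolding prod.lessThan_Suc_shift ix by simp
    have "(TT n l ^^ Suc k) v s = monom (of_nat (n - s + 1)) l * (TT n l ^^ k) v (s - 1)"
      using True Suc.prems by (simp add: TT_def)
    also have "\<dots> = (if Suc k < s then monom (\<Prod>r<Suc k. of_nat (n - s + 1 + r)) (l * Suc k) * v (s - Suc k) else 0)"
    proof (cases "k < s - 1")
      case True
      then have "Suc k < s" by simp
      moreover have "s - 1 - k = s - Suc k" by simp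
      ultimately show ?thesis unfolding Suc.IH[OF s1] pr using True
        by (simp only: if_True mult.assoc[symmetric] mult_monom mult_Suc_right)
    next
      case False
      then show ?thesis unfolding Suc.IH[OF s1] by simp
    qed
    finally show ?thesis .
  qed
qed

lemma TD_pow:
  assumes "r \<in> {1..n}"
  shows "(TD n ^^ k) v r = (if r + k \<le> n then of_nat (\<Prod>q<k. r + q) * v (r + k) else 0)"
  using assms
proof (induction k arbitrary: r)
  case 0 then show ?case by simp
next
  case (Suc k)
  show ?case
  proof (cases "r < n")
    case False
    then show ?thesis using Suc.prems by (simp add: TD_def)
  next
    case True
    have r1: "r + 1 \<in> {1..n}" using True Suc.prems by auto
    have pr: "(\<Prod>q<Suc k. r + q) = r * (\<Prod>q<k. r + 1 + q)"
      unfolding prod.lessThan_Suc_shift by simp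
    have "(TD n ^^ Suc k) v r = of_nat r * (TD n ^^ k) v (r + 1)"
      using True Suc.prems by (simp add: TD_def)
    also have "\<dots> = (if r + Suc k \<le> n then of_nat (\<Prod>q<Suc k. r + q) * v (r + Suc k) else 0)"
    proof (cases "r + 1 + k \<le> n")
      case True
      then show ?thesis unfolding Suc.IH[OF r1] pr
        by (simp only: if_True of_nat_mult mult.assoc) simp
    next
      case False
      then show ?thesis unfolding Suc.IH[OF r1] by simp
    qed
    finally show ?thesis .
  qed
qed




definition yv :: "nat \<Rightarrow> nat \<Rightarrow> nat \<Rightarrow> nat \<Rightarrow> 'k::field_char_0 poly" where
  "yv n l i = (\<lambda>s. \<Sum>k<n. smult ((-1)^k / fact k) ((TT n l ^^ k) (\<lambda>s. if s = i then 1 else 0) s))"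

definition zv :: "nat \<Rightarrow> nat \<Rightarrow> nat \<Rightarrow> int \<Rightarrow> nat \<Rightarrow> 'k::field_char_0 poly" where
  "zv n l i d = (\<lambda>r. \<Sum>k<n. smult (of_int d ^ k / fact k) ((TD n ^^ k) (yv n l i) r))"

definition wv :: "nat \<Rightarrow> nat \<Rightarrow> nat \<Rightarrow> int \<Rightarrow> nat \<Rightarrow> 'k::field_char_0 poly" where
  "wv n l i d = (\<lambda>j. \<Sum>k<n. smult (1 ^ k / fact k) ((TT n l ^^ k) (zv n l i d) j))"

lemma TT_nil: "m \<ge> n \<Longrightarrow> s \<in> {1..n} \<Longrightarrow> (TT n l ^^ m) v s = 0"
  by (simp add: TT_pow)
lemma TD_nil: "m \<ge> n \<Longrightarrow> s \<in> {1..n} \<Longrightarrow> (TD n ^^ m) v s = 0"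
  by (simp add: TD_pow)

lemma main_eq:
  assumes "n \<ge> 1" "i \<in> {1..n}"
  shows "ipow (phi n l) d (Var i) = (L n (wv n l i d) :: 'k::field_char_0 mpoly)"
proof -
  have "expA (Bs n l) (-1) (Var i) = (L n (yv n l i) :: 'k mpoly)"
    unfolding L_Var[OF assms(2), symmetric] yv_def
    by (rule expA_L[OF good_Bs Bs_L[OF assms(1)] TT_nil])
  moreover have "expA (Dt' n) (of_int d) (L n (yv n l i)) = (L n (zv n l i d) :: 'k mpoly)"
    unfolding zv_def
    by (rule expA_L[OF good_Dt' Dt'_L[OF assms(1)] TD_nil])
  moreover have "expA (Bs n l) 1 (L n (zv n l i d)) = (L n (wv n l i d) :: 'k mpoly)"
    unfolding wv_def
    by (rule expA_L[OF good_Bs Bs_L[OF assms(1)] TT_nil])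
  ultimately show ?thesis by (simp add: ipow_phi)
qed

lemma prod_of_nat_nz: "(\<And>r. r < (k::nat) \<Longrightarrow> f r \<noteq> 0) \<Longrightarrow> (\<Prod>r<k. of_nat (f r) :: 'k::field_char_0) \<noteq> 0"
  by (subst prod_zero_iff) auto

lemma yv_eq:
  assumes s: "s \<in> {1..n}" and i: "i \<in> {1..n}"
  shows "(yv n l i s :: 'k::field_char_0 poly) = (if i \<le> s then monom ((-1)^(s-i) / fact (s-i) * (\<Prod>r<s-i. of_nat (n - s + 1 + r))) (l*(s-i)) else 0)"
proof -
  have "yv n l i s = (\<Sum>k<n. if k = s - i then (if i \<le> s then
      monom ((-1)^(s-i) / fact (s-i) * (\<Prod>r<s-i. of_nat (n - s + 1 + r))) (l*(s-i)) else 0 :: 'k poly) else 0)"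
    unfolding yv_def
  proof (rule sum.cong[OF refl])
    fix k assume "k \<in> {..<n}"
    show "smult ((-1)^k / fact k) ((TT n l ^^ k) (\<lambda>s. if s = i then 1 else 0) s)
      = (if k = s - i then (if i \<le> s then
      monom ((-1)^(s-i) / fact (s-i) * (\<Prod>r<s-i. of_nat (n - s + 1 + r))) (l*(s-i)) else 0 :: 'k poly) else 0)"
      unfolding TT_pow[OF s] using s i by (auto simp: smult_monom)
  qed
  also have "\<dots> = (if i \<le> s then monom ((-1)^(s-i) / fact (s-i) * (\<Prod>r<s-i. of_nat (n - s + 1 + r))) (l*(s-i)) else 0)"
  proof -
    have "s - i \<in> {..<n}" using s i by auto
    then show ?thesis by (simp only: sum.delta finite_lessThan if_True)
  qed
  finally show ?thesis .
qed


context
  fixes n l i :: nat and d :: int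
  assumes n3: "n \<ge> 3" and l1: "l \<ge> 1" and i1: "1 \<le> i" and iN: "i \<le> n" and d0: "d \<noteq> 0"
begin

lemma iin: "i \<in> {1..n}" using i1 iN by simp

lemma Y1: "s \<in> {1..n} \<Longrightarrow> degree (yv n l i s :: 'k::field_char_0 poly) \<le> l*(n-i)"
proof -
  assume s: "s \<in> {1..n}"
  show ?thesis
  proof (cases "i \<le> s")
    case True
    have "l * (s - i) \<le> l * (n - i)" using s by (intro mult_le_mono2) auto
    then show ?thesis unfolding yv_eq[OF s iin] using True
      by (simp add: order_trans[OF degree_monom_le])
  next
    case False
    then show ?thesis unfolding yv_eq[OF s iin] by simp
  qed
qed

lemma Y2: "s \<in> {1..n} \<Longrightarrow> s < n \<Longrightarrow> coeff (yv n l i s :: 'k::field_char_0 poly) (l*(n-i)) = 0"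
proof -
  assume s: "s \<in> {1..n}" and sn: "s < n"
  show ?thesis
  proof (cases "i \<le> s")
    case True
    then have "s - i < n - i" using sn by simp
    then have "l * (s - i) \<noteq> l * (n - i)" using l1 by simp
    then show ?thesis unfolding yv_eq[OF s iin] using True by (simp add: coeff_monom)
  next
    case False
    then show ?thesis unfolding yv_eq[OF s iin] by simp
  qed
qed

lemma Y3: "coeff (yv n l i n :: 'k::field_char_0 poly) (l*(n-i)) \<noteq> 0"
proof -
  have nn: "n \<in> {1..n}" using n3 by simp
  have "(\<Prod>r<n-i. of_nat (n - n + 1 + r) :: 'k) \<noteq> 0" by (rule prod_of_nat_nz) simp
  then show ?thesis unfolding yv_eq[OF nn iin] using iN by (simp add: coeff_monom)
qed

lemma zv_eq:
  assumes r: "r \<in> {1..n}"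
  shows "(zv n l i d r :: 'k::field_char_0 poly) = (\<Sum>k<n. smult (of_int d ^ k / fact k)
     (if r + k \<le> n then of_nat (\<Prod>q<k. r + q) * yv n l i (r + k) else 0))"
  unfolding zv_def by (rule sum.cong[OF refl]) (simp add: TD_pow[OF r])

lemma Z1: "r \<in> {1..n} \<Longrightarrow> degree (zv n l i d r :: 'k::field_char_0 poly) \<le> l*(n-i)"
proof -
  assume r: "r \<in> {1..n}"
  show ?thesis
    unfolding zv_eq[OF r]
  proof (rule degree_sum_le)
    fix k assume "k \<in> {..<n}"
    show "degree (smult (of_int d ^ k / fact k)
     (if r + k \<le> n then of_nat (\<Prod>q<k. r + q) * yv n l i (r + k) else 0) :: 'k poly) \<le> l*(n-i)"
    proof (cases "r + k \<le> n")
      case True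
      then have "r + k \<in> {1..n}" using r by simp
      from Y1[OF this] have "degree (of_nat (\<Prod>q<k. r + q) * yv n l i (r + k) :: 'k poly) \<le> l*(n-i)"
        unfolding of_nat_mult_conv_smult by (rule order_trans[OF degree_smult_le])
      then show ?thesis using True by (simp add: order_trans[OF degree_smult_le])
    next
      case False
      then show ?thesis by simp
    qed
  qed simp
qed

lemma Z2: "coeff (zv n l i d 1 :: 'k::field_char_0 poly) (l*(n-i)) \<noteq> 0"
proof -
  have one: "(1::nat) \<in> {1..n}" using n3 by simp
  let ?c = "of_int d ^ (n-1) / fact (n-1) * (of_nat (\<Prod>q<n-1. 1 + q) * coeff (yv n l i n) (l*(n-i))) :: 'k"
  have "coeff (zv n l i d 1 :: 'k poly) (l*(n-i)) = (\<Sum>k<n. if k = n - 1 then ?c else 0)"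
    unfolding zv_eq[OF one] coeff_sum
  proof (rule sum.cong[OF refl])
    fix k assume k: "k \<in> {..<n}"
    show "coeff (smult (of_int d ^ k / fact k)
     (if 1 + k \<le> n then of_nat (\<Prod>q<k. 1 + q) * yv n l i (1 + k) else 0) :: 'k poly) (l*(n-i))
      = (if k = n - 1 then ?c else 0)"
    proof (cases "k = n - 1")
      case True
      then have "1 + k = n" using n3 by simp
      then show ?thesis using True by (simp add: of_nat_mult_conv_smult del: of_nat_prod)
    next
      case False
      then have "1 + k < n" "1 + k \<in> {1..n}" using k by auto
      then show ?thesis using False Y2[of "1+k"] by (auto simp add: of_nat_mult_conv_smult simp del: of_nat_prod)
    qed
  qed
  also have "\<dots> = ?c" using n3 by simp
  finally have e: "coeff (zv n l i d 1 :: 'k poly) (l*(n-i)) = ?c" .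
  have "(of_nat (\<Prod>q<n-1. 1 + q) :: 'k) \<noteq> 0"
    by (simp only: of_nat_eq_0_iff prod_zero_iff finite_lessThan) simp
  moreover have "(of_int d :: 'k) \<noteq> 0" using d0 by simp
  ultimately show ?thesis unfolding e using Y3 by simp
qed

lemma wv_eq:
  assumes j: "j \<in> {1..n}"
  shows "(wv n l i d j :: 'k::field_char_0 poly) = (\<Sum>k<n. smult (1 / fact k)
     (if k < j then monom (\<Prod>r<k. of_nat (n - j + 1 + r)) (l*k) * zv n l i d (j - k) else 0))"
  unfolding wv_def by (rule sum.cong[OF refl]) (simp add: TT_pow[OF j])

lemma W1: "j \<in> {1..n} \<Longrightarrow> degree (wv n l i d j :: 'k::field_char_0 poly) \<le> l*(j-1) + l*(n-i)"
proof -
  assume j: "j \<in> {1..n}"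
  show ?thesis
    unfolding wv_eq[OF j]
  proof (rule degree_sum_le)
    fix k assume "k \<in> {..<n}"
    show "degree (smult (1 / fact k)
     (if k < j then monom (\<Prod>r<k. of_nat (n - j + 1 + r)) (l*k) * zv n l i d (j - k) else 0) :: 'k poly)
       \<le> l*(j-1) + l*(n-i)"
    proof (cases "k < j")
      case True
      then have jk: "j - k \<in> {1..n}" using j by auto
      have "degree (monom (\<Prod>r<k. of_nat (n - j + 1 + r)) (l*k) * zv n l i d (j - k) :: 'k poly)
          \<le> degree (monom (\<Prod>r<k. of_nat (n - j + 1 + r)) (l*k) :: 'k poly) + degree (zv n l i d (j - k) :: 'k poly)"
        by (rule degree_mult_le)
      also have "\<dots> \<le> l*k + l*(n-i)"
        using degree_monom_le Z1[OF jk] by (rule add_mono)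
      also have "\<dots> \<le> l*(j-1) + l*(n-i)"
        using True by (intro add_mono mult_le_mono2) linarith+
      finally show ?thesis using True by (simp add: order_trans[OF degree_smult_le])
    next
      case False
      then show ?thesis by simp
    qed
  qed simp
qed

lemma W3: "coeff (wv n l i d n :: 'k::field_char_0 poly) (l*(n-1) + l*(n-i)) \<noteq> 0"
proof -
  have nn: "n \<in> {1..n}" using n3 by simp
  let ?Q = "(\<Prod>r<n-1. of_nat (n - n + 1 + r)) :: 'k"
  let ?c = "1 / fact (n-1) * (?Q * coeff (zv n l i d 1) (l*(n-i))) :: 'k"
  have "coeff (wv n l i d n :: 'k poly) (l*(n-1) + l*(n-i)) = (\<Sum>k<n. if k = n - 1 then ?c else 0)"
    unfolding wv_eq[OF nn] coeff_sum
  proof (rule sum.cong[OF refl])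
    fix k assume k: "k \<in> {..<n}"
    show "coeff (smult (1 / fact k)
     (if k < n then monom (\<Prod>r<k. of_nat (n - n + 1 + r)) (l*k) * zv n l i d (n - k) else 0) :: 'k poly)
       (l*(n-1) + l*(n-i)) = (if k = n - 1 then ?c else 0)"
    proof (cases "k = n - 1")
      case True
      then have "n - k = 1" "k < n" using n3 by auto
      then show ?thesis using True by (simp add: coeff_monom_mult)
    next
      case False
      then have kk: "k < n - 1" "n - k \<in> {1..n}" using k by auto
      have "degree (monom (\<Prod>r<k. of_nat (n - n + 1 + r)) (l*k) * zv n l i d (n - k) :: 'k poly)
          \<le> degree (monom (\<Prod>r<k. of_nat (n - n + 1 + r)) (l*k) :: 'k poly) + degree (zv n l i d (n - k) :: 'k poly)"
        by (rule degree_mult_le)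
      also have "\<dots> \<le> l*k + l*(n-i)"
        using degree_monom_le Z1[OF kk(2)] by (rule add_mono)
      also have "\<dots> < l*(n-1) + l*(n-i)"
        using kk(1) l1 by simp
      finally have "coeff (monom (\<Prod>r<k. of_nat (n - n + 1 + r)) (l*k) * zv n l i d (n - k) :: 'k poly) (l*(n-1) + l*(n-i)) = 0"
        by (rule coeff_eq_0)
      then show ?thesis using False k by simp
    qed
  qed
  also have "\<dots> = ?c" using n3 by simp
  finally have e: "coeff (wv n l i d n :: 'k poly) (l*(n-1) + l*(n-i)) = ?c" .
  have "?Q \<noteq> 0" by (rule prod_of_nat_nz) simp
  then show ?thesis unfolding e using Z2 by simp
qed

lemma keys_w:
  assumes "m \<in> Poly_Mapping.keys (L n (wv n l i d) :: 'k::field_char_0 mpoly)"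
  shows "\<exists>j\<in>{1..n}. \<exists>k. m = Poly_Mapping.single 0 k + Poly_Mapping.single j 1 \<and> k \<le> l*(j-1) + l*(n-i)"
proof -
  from keys_L[OF assms] obtain j k where jk: "j \<in> {1..n}" "m = Poly_Mapping.single 0 k + Poly_Mapping.single j 1"
    "coeff (wv n l i d j :: 'k poly) k \<noteq> 0" by blast
  have "k \<le> degree (wv n l i d j :: 'k poly)" using jk(3) by (rule le_degree)
  also have "\<dots> \<le> l*(j-1) + l*(n-i)" using W1[OF jk(1)] .
  finally show ?thesis using jk by blast
qed

end

lemma wsum:
  fixes w :: "nat \<Rightarrow> nat"
  assumes "(j::nat) \<in> {1..n}"
  shows "(\<Sum>s\<in>{0..n}. Poly_Mapping.lookup (Poly_Mapping.single 0 k + Poly_Mapping.single j 1) s * w s) = k * w 0 + w j"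
proof -
  have "(\<Sum>s\<in>{0..n}. Poly_Mapping.lookup (Poly_Mapping.single 0 k + Poly_Mapping.single j 1) s * w s)
      = (\<Sum>s\<in>{0..n}. (if s = 0 then k * w s else 0) + (if s = j then w s else 0))"
    by (rule sum.cong[OF refl]) (use assms in \<open>auto simp: lookup_add lookup_single when_def algebra_simps\<close>)
  also have "\<dots> = k * w 0 + w j" using assms by (simp add: sum.distrib)
  finally show ?thesis .
qed

lemma w2_arith:
  fixes n l i j k :: nat
  assumes "n \<ge> 3" "l \<ge> 1" "1 \<le> i" "i \<le> n" "1 \<le> j" "j \<le> n" "k \<le> l*(j-1) + l*(n-i)"
  shows "k * w2 n 0 + w2 n j \<le> (n - 2) * ((2 * n - i - 1) * l) + (n - 1) * 1"
proof -
  let ?A = "l*(j-1) + l*(n-i)"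
  have e1: "2*n - i - 1 = (j-1) + (n-i) + (n-j)" using assms by simp
  have w0: "w2 n 0 = n - 2" by (simp add: w2_def)
  have wj: "w2 n j = (n-1) + (n-j)" using assms by (simp add: w2_def)
  have a: "(2*n-i-1)*l = ?A + l*(n-j)" unfolding e1 by (simp add: algebra_simps)
  have b: "k*(n-2) \<le> ?A*(n-2)" using assms(7) by (rule mult_le_mono1)
  have c1: "1 \<le> (n-2)*l" using assms(1,2) by simp
  have c: "1*(n-j) \<le> ((n-2)*l)*(n-j)" using c1 by (rule mult_le_mono1)
  have gen: "\<And>a b c e::nat. a*(b + c*e) = b*a + (a*c)*e" by (simp add: algebra_simps)
  have d: "(n - 2) * (?A + l*(n-j)) = ?A*(n-2) + ((n-2)*l)*(n-j)" by (rule gen)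
  show ?thesis unfolding w0 wj a d using b c by linarith
qed

theorem mainTheorem8:
  fixes n l i :: nat and d :: int
  assumes "n \<ge> 3" and "l \<ge> 1" and "d \<noteq> 0" and "1 \<le> i" and "i \<le> n"
  shows "ipow (phi n l :: 'k::field_char_0 mpoly \<Rightarrow> 'k mpoly) d (Var i)
           \<in> Pset n ((2 * n - i - 1) * l) 1"
proof -
  note W3' = W3[OF assms(1,2,4,5,3)]
  note keys_w' = keys_w[OF assms(1,2,4,5,3)]
  let ?p = "L n (wv n l i d) :: 'k mpoly"
  let ?\<alpha> = "(2*n-i-1)*l"
  have e1: "2*n - i - 1 = (n-1) + (n-i)" using assms by simp
  have \<alpha>: "?\<alpha> = l*(n-1) + l*(n-i)" unfolding e1 by (simp add: algebra_simps)
  have eq: "ipow (phi n l) d (Var i) = ?p"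
    by (rule main_eq) (use assms in auto)
  have nn: "n \<in> {1..n}" using assms by simp
  define M where "M = Poly_Mapping.single 0 ?\<alpha> + Poly_Mapping.single n (1::nat)"
  have lM: "Poly_Mapping.lookup ?p M = coeff (wv n l i d n) ?\<alpha>"
    unfolding M_def by (rule lookup_L[OF nn])
  have Mk: "M \<in> Poly_Mapping.keys ?p"
    using W3' lM \<alpha> by (simp add: in_keys_iff)
  have p0: "?p \<noteq> 0" using Mk by auto
  have fin: "finite ((\<lambda>m. \<Sum>j\<in>{0..n}. Poly_Mapping.lookup m j * w j) ` Poly_Mapping.keys ?p)" for w
    by simp
  have ne: "(\<lambda>m. \<Sum>j\<in>{0..n}. Poly_Mapping.lookup m j * w j) ` Poly_Mapping.keys ?p \<noteq> {}" for w
    using Mk by blast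
  have wd1: "wdeg n w1 ?p \<le> ?\<alpha> + 1"
    unfolding wdeg_def Max_le_iff[OF fin ne]
  proof
    fix x assume "x \<in> (\<lambda>m. \<Sum>j\<in>{0..n}. Poly_Mapping.lookup m j * w1 j) ` Poly_Mapping.keys ?p"
    then obtain m where m: "m \<in> Poly_Mapping.keys ?p" "x = (\<Sum>j\<in>{0..n}. Poly_Mapping.lookup m j * w1 j)" by blast
    from keys_w'[OF m(1)] obtain j k where jk: "j \<in> {1..n}" "m = Poly_Mapping.single 0 k + Poly_Mapping.single j 1"
      "k \<le> l*(j-1) + l*(n-i)" by blast
    have "l*(j-1) \<le> l*(n-1)" using jk(1) by (intro mult_le_mono2) auto
    then have "k \<le> ?\<alpha>" using jk(3) \<alpha> by linarith
    then show "x \<le> ?\<alpha> + 1" unfolding m(2) jk(2) wsum[OF jk(1)] by (simp add: w1_def)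
  qed
  have wd2: "wdeg n (w2 n) ?p \<le> (n - 2) * ?\<alpha> + (n - 1) * 1"
    unfolding wdeg_def Max_le_iff[OF fin ne]
  proof
    fix x assume "x \<in> (\<lambda>m. \<Sum>j\<in>{0..n}. Poly_Mapping.lookup m j * w2 n j) ` Poly_Mapping.keys ?p"
    then obtain m where m: "m \<in> Poly_Mapping.keys ?p" "x = (\<Sum>j\<in>{0..n}. Poly_Mapping.lookup m j * w2 n j)" by blast
    from keys_w'[OF m(1)] obtain j k where jk: "j \<in> {1..n}" "m = Poly_Mapping.single 0 k + Poly_Mapping.single j 1"
      "k \<le> l*(j-1) + l*(n-i)" by blast
    show "x \<le> (n - 2) * ?\<alpha> + (n - 1) * 1" unfolding m(2) jk(2) wsum[OF jk(1)]
      by (rule w2_arith) (use assms jk in auto)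
  qed
  have lead: "is_lead_mon ?p M"
    unfolding is_lead_mon_def
  proof (intro conjI ballI impI)
    show "M \<in> Poly_Mapping.keys ?p" by (rule Mk)
    fix m' assume m': "m' \<in> Poly_Mapping.keys ?p" "m' \<noteq> M"
    from keys_w'[OF m'(1)] obtain j k where jk: "j \<in> {1..n}" "m' = Poly_Mapping.single 0 k + Poly_Mapping.single j 1"
      "k \<le> l*(j-1) + l*(n-i)" by blast
    have "l*(j-1) \<le> l*(n-1)" using jk(1) by (intro mult_le_mono2) auto
    then have kle: "k \<le> ?\<alpha>" using jk(3) \<alpha> by linarith
    have "k \<noteq> ?\<alpha>"
    proof
      assume k: "k = ?\<alpha>"
      show False
      proof (cases "j = n")
        case True
        then show False using m'(2) jk(2) k unfolding M_def by simp
      next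
        case False
        then have "j - 1 < n - 1" using jk(1) by auto
        then have "l*(j-1) < l*(n-1)" using assms(2) by simp
        then show False using jk(3) k \<alpha> by linarith
      qed
    qed
    with kle have kl: "k < ?\<alpha>" by simp
    have "Poly_Mapping.lookup m' 0 = k" unfolding jk(2) by (rule lookup_mon0) (use jk(1) in simp)
    moreover have "Poly_Mapping.lookup M 0 = ?\<alpha>" unfolding M_def by (rule lookup_mon0) (use assms in simp)
    ultimately show "lex_less m' M" unfolding lex_less_def using kl
      by (intro exI[of _ 0]) simp
  qed
  show ?thesis
    unfolding eq Pset_def using p0 wd1 wd2 lead unfolding M_def by simp
qed


end
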